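(* Let $E$, $s$ and $\mathrm{Rel}(s,\cdot)$ be as follows, and let $\mathcal{I}$ be the layout-constraint family below. Let $T^*\in\arg\max_{T\in\mathcal{I}}\mathrm{Rel}(s,T)$ and let $\hat T$ be the output of the algorithm GreedyTimeline: start with $\hat T=\emptyset$; repeatedly let $C=\{e\in E\setminus\hat T:\hat T\cup\{e\}\in\mathcal{I}\}$ and, if $C\neq\emptyset$, add to $\hat T$ an element $e\in C$ maximizing the marginal gain $\mathrm{Rel}(s,\hat T\cup\{e\})-\mathrm{Rel}(s,\hat T)$; stop when $C=\emptyset$ and return $\hat T$. Then $\mathrm{Rel}(s,\hat T)\ge \tfrac13\,\mathrm{Rel}(s,T^* )$, for any subject $s$.
   Context: Events: $\mathcal{E}$ is a finite set of events over all subjects; $E\subseteq\mathcal{E}$ is the finite set of candidate events of subject $s$. Each event $e$ has a subject $\mathrm{Sub}(e)$, a related entity $\mathrm{RE}(e)$, a timestamp $\tau(e)\in\mathbb{R}$, an entity path $\pi_{RE}(e)$ and a time path $\pi_\tau(e)$. Nonnegative scores $\mathrm{E2ECooc}(x,y)\ge0$ (entity–entity), $\mathrm{E2DCooc}(x,t)\ge0$ (entity–date) and $\mathrm{GlobalImportance}(re)\ge0$ are given. With $0\le\lambda\le1$ and $w^e_1,w^e_2,w^e_3,w^d_1,w^d_2\ge0$, $\mathrm{Rel}(s,T)=\lambda(w^e_1\mathrm{E2E}(s,T)+w^e_2\mathrm{E2EPath}(T)+w^e_3\mathrm{G2E}(T))+(1-\lambda)(w^d_1\mathrm{E2D}(s,T)+w^d_2\mathrm{E2DPath}(T))$,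 where $\mathrm{E2E}(s,T)=\sum_{re\in\{\mathrm{RE}(e):e\in T\}}\mathrm{E2ECooc}(s,re)$, $\mathrm{G2E}(T)=\sum_{re\in\{\mathrm{RE}(e):e\in T\}}\mathrm{GlobalImportance}(re)$, $\mathrm{E2EPath}(T)=\sum_{p\in\{\pi_{RE}(e):e\in T\}}\operatorname{average}_{e\in\mathcal{E},\pi_{RE}(e)=p}\mathrm{E2ECooc}(\mathrm{Sub}(e),\mathrm{RE}(e))$, $\mathrm{E2D}(s,T)=\sum_{t\in\{\tau(e):e\in T\}}\mathrm{E2DCooc}(s,t)$, $\mathrm{E2DPath}(T)=\sum_{p\in\{\pi_\tau(e):e\in T\}}\operatorname{average}_{e\in\mathcal{E},\pi_\tau(e)=p}\mathrm{E2DCooc}(\mathrm{Sub}(e),\tau(e))$; all sums are over sets (each distinct value counted once). Layout constraint: fix a real $t_w>0$ and an integer $n\ge1$; $\mathcal{I}$ is the family of all $T\subseteq E$ with $|\{e\in T:\tau(e)\in[t,t+t_w)\}|\le n$ for every $t\in\mathbb{R}$. *)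

theory Defs
  imports Complex_Main
begin

definition average :: "'a set \<Rightarrow> ('a \<Rightarrow> real) \<Rightarrow> real" where
  "average A f = (\<Sum>x\<in>A. f x) / real (card A)"

definition E2E :: "('r \<Rightarrow> 'r \<Rightarrow> real) \<Rightarrow> ('e \<Rightarrow> 'r) \<Rightarrow> 'r \<Rightarrow> 'e set \<Rightarrow> real" where
  "E2E E2ECooc RE s T = (\<Sum>re\<in>RE ` T. E2ECooc s re)"

definition G2E :: "('r \<Rightarrow> real) \<Rightarrow> ('e \<Rightarrow> 'r) \<Rightarrow> 'e set \<Rightarrow> real" where
  "G2E GI RE T = (\<Sum>re\<in>RE ` T. GI re)"

definition E2EPath :: "'e set \<Rightarrow> ('e \<Rightarrow> 'r) \<Rightarrow> ('e \<Rightarrow> 'r) \<Rightarrow> ('e \<Rightarrow> 'p)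
    \<Rightarrow> ('r \<Rightarrow> 'r \<Rightarrow> real) \<Rightarrow> 'e set \<Rightarrow> real" where
  "E2EPath Ev Sub RE piRE E2ECooc T =
     (\<Sum>p\<in>piRE ` T. average {e\<in>Ev. piRE e = p} (\<lambda>e. E2ECooc (Sub e) (RE e)))"

definition E2D :: "('r \<Rightarrow> real \<Rightarrow> real) \<Rightarrow> ('e \<Rightarrow> real) \<Rightarrow> 'r \<Rightarrow> 'e set \<Rightarrow> real" where
  "E2D E2DCooc tau s T = (\<Sum>t\<in>tau ` T. E2DCooc s t)"

definition E2DPath :: "'e set \<Rightarrow> ('e \<Rightarrow> 'r) \<Rightarrow> ('e \<Rightarrow> real) \<Rightarrow> ('e \<Rightarrow> 'q)
    \<Rightarrow> ('r \<Rightarrow> real \<Rightarrow> real) \<Rightarrow> 'e set \<Rightarrow> real" where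
  "E2DPath Ev Sub tau pitau E2DCooc T =
     (\<Sum>p\<in>pitau ` T. average {e\<in>Ev. pitau e = p} (\<lambda>e. E2DCooc (Sub e) (tau e)))"

definition Rel ::
  "'e set \<Rightarrow> ('e \<Rightarrow> 'r) \<Rightarrow> ('e \<Rightarrow> 'r) \<Rightarrow> ('e \<Rightarrow> real) \<Rightarrow> ('e \<Rightarrow> 'p) \<Rightarrow> ('e \<Rightarrow> 'q)
   \<Rightarrow> ('r \<Rightarrow> 'r \<Rightarrow> real) \<Rightarrow> ('r \<Rightarrow> real \<Rightarrow> real) \<Rightarrow> ('r \<Rightarrow> real)
   \<Rightarrow> real \<Rightarrow> real \<Rightarrow> real \<Rightarrow> real \<Rightarrow> real \<Rightarrow> real
   \<Rightarrow> 'r \<Rightarrow> 'e set \<Rightarrow> real" where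
  "Rel Ev Sub RE tau piRE pitau E2ECooc E2DCooc GI lam we1 we2 we3 wd1 wd2 s T =
     lam * (we1 * E2E E2ECooc RE s T + we2 * E2EPath Ev Sub RE piRE E2ECooc T
            + we3 * G2E GI RE T)
     + (1 - lam) * (wd1 * E2D E2DCooc tau s T + wd2 * E2DPath Ev Sub tau pitau E2DCooc T)"

definition layout_family :: "'e set \<Rightarrow> ('e \<Rightarrow> real) \<Rightarrow> real \<Rightarrow> nat \<Rightarrow> 'e set set" where
  "layout_family E tau tw n =
     {T. T \<subseteq> E \<and> (\<forall>t::real. card {e\<in>T. tau e \<in> {t..<t + tw}} \<le> n)}"

definition greedy_cands :: "'e set \<Rightarrow> 'e set set \<Rightarrow> 'e set \<Rightarrow> 'e set" where
  "greedy_cands E I T = {e \<in> E - T. insert e T \<in> I}"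

text \<open>States reachable by GreedyTimeline (ties broken arbitrarily): each step adds a
  candidate of maximal marginal gain f(T+e) - f(T).\<close>
inductive greedy_reach :: "'e set \<Rightarrow> 'e set set \<Rightarrow> ('e set \<Rightarrow> real) \<Rightarrow> 'e set \<Rightarrow> bool"
  for E I f where
  empty: "greedy_reach E I f {}"
| step: "greedy_reach E I f T \<Longrightarrow> e \<in> greedy_cands E I T \<Longrightarrow>
         (\<forall>e'\<in>greedy_cands E I T. f (insert e' T) - f T \<le> f (insert e T) - f T) \<Longrightarrow>
         greedy_reach E I f (insert e T)"

definition greedy_output :: "'e set \<Rightarrow> 'e set set \<Rightarrow> ('e set \<Rightarrow> real) \<Rightarrow> 'e set \<Rightarrow> bool" where
  "greedy_output E I f T \<longleftrightarrow> greedy_reach E I f T \<and> greedy_cands E I T = {}"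

end

theory Submission
  imports Defs
begin

definition Cv :: "('e \<Rightarrow> 'v) \<Rightarrow> ('v \<Rightarrow> real) \<Rightarrow> 'e set \<Rightarrow> real" where
  "Cv \<phi> w T = (\<Sum>v\<in>\<phi> ` T. w v)"

lemma Cv_mono:
  assumes "finite B" "A \<subseteq> B" "\<And>v. w v \<ge> 0"
  shows "Cv \<phi> w A \<le> Cv \<phi> w B"
  unfolding Cv_def using assms by (intro sum_mono2) auto

lemma Cv_insert:
  assumes "finite B"
  shows "Cv \<phi> w (insert x B) = (if \<phi> x \<in> \<phi> ` B then 0 else w (\<phi> x)) + Cv \<phi> w B"
  unfolding Cv_def using assms by (auto simp: insert_absorb)

lemma Cv_sub:
  assumes "finite B" "A \<subseteq> B" "\<And>v. w v \<ge> 0"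
  shows "Cv \<phi> w (insert x B) - Cv \<phi> w B \<le> Cv \<phi> w (insert x A) - Cv \<phi> w A"
proof -
  have fA: "finite A" using assms finite_subset by blast
  show ?thesis using Cv_insert[OF assms(1), of \<phi> w x] Cv_insert[OF fA, of \<phi> w x] assms(2,3)
    by (auto simp: image_mono)
qed

lemma lin_mono:
  fixes a1 a2 a3 a4 a5 :: real
  assumes "finite B" "A \<subseteq> B" "a1 \<ge> 0" "a2 \<ge> 0" "a3 \<ge> 0" "a4 \<ge> 0" "a5 \<ge> 0"
    "\<And>v. w1 v \<ge> 0" "\<And>v. w2 v \<ge> 0" "\<And>v. w3 v \<ge> 0" "\<And>v. w4 v \<ge> 0" "\<And>v. w5 v \<ge> 0"
    "\<And>T. f T = a1 * Cv p1 w1 T + a2 * Cv p2 w2 T + a3 * Cv p3 w3 T + a4 * Cv p4 w4 T + a5 * Cv p5 w5 T"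
  shows "f A \<le> f B" and "f (insert x B) - f B \<le> f (insert x A) - f A"
proof -
  note m = Cv_mono[OF assms(1,2)]
  have "a1 * Cv p1 w1 A \<le> a1 * Cv p1 w1 B" by (rule mult_left_mono[OF m]) (use assms in auto)
  moreover have "a2 * Cv p2 w2 A \<le> a2 * Cv p2 w2 B" by (rule mult_left_mono[OF m]) (use assms in auto)
  moreover have "a3 * Cv p3 w3 A \<le> a3 * Cv p3 w3 B" by (rule mult_left_mono[OF m]) (use assms in auto)
  moreover have "a4 * Cv p4 w4 A \<le> a4 * Cv p4 w4 B" by (rule mult_left_mono[OF m]) (use assms in auto)
  moreover have "a5 * Cv p5 w5 A \<le> a5 * Cv p5 w5 B" by (rule mult_left_mono[OF m]) (use assms in auto)
  ultimately show "f A \<le> f B" unfolding assms(13) by linarith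
  note s = Cv_sub[OF assms(1,2)]
  have "a1 * (Cv p1 w1 (insert x B) - Cv p1 w1 B) \<le> a1 * (Cv p1 w1 (insert x A) - Cv p1 w1 A)"
    by (rule mult_left_mono[OF s]) (use assms in auto)
  moreover have "a2 * (Cv p2 w2 (insert x B) - Cv p2 w2 B) \<le> a2 * (Cv p2 w2 (insert x A) - Cv p2 w2 A)"
    by (rule mult_left_mono[OF s]) (use assms in auto)
  moreover have "a3 * (Cv p3 w3 (insert x B) - Cv p3 w3 B) \<le> a3 * (Cv p3 w3 (insert x A) - Cv p3 w3 A)"
    by (rule mult_left_mono[OF s]) (use assms in auto)
  moreover have "a4 * (Cv p4 w4 (insert x B) - Cv p4 w4 B) \<le> a4 * (Cv p4 w4 (insert x A) - Cv p4 w4 A)"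
    by (rule mult_left_mono[OF s]) (use assms in auto)
  moreover have "a5 * (Cv p5 w5 (insert x B) - Cv p5 w5 B) \<le> a5 * (Cv p5 w5 (insert x A) - Cv p5 w5 A)"
    by (rule mult_left_mono[OF s]) (use assms in auto)
  ultimately show "f (insert x B) - f B \<le> f (insert x A) - f A" unfolding assms(13)
    by (simp add: right_diff_distrib)
qed

lemma card_filter_sum:
  "finite A \<Longrightarrow> card {x\<in>A. P x} = (\<Sum>x\<in>A. if P x then 1 else 0 :: nat)"
  by (simp add: sum.inter_filter[symmetric])

lemma open_window:
  assumes "Op \<in> layout_family E tau tw n" "finite E"
  shows "card {y\<in>Op. c - tw < tau y \<and> tau y < c} \<le> n"
proof (cases "{y\<in>Op. c - tw < tau y \<and> tau y < c} = {}")
  case True show ?thesis unfolding True by simp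
next
  case False
  let ?S = "{y\<in>Op. c - tw < tau y \<and> tau y < c}"
  have fO: "finite Op" using assms unfolding layout_family_def using finite_subset by blast
  have fS: "finite ?S" using fO by simp
  define t where "t = Min (tau ` ?S)"
  have tin: "t \<in> tau ` ?S" unfolding t_def using fS False by (intro Min_in) auto
  have "?S \<subseteq> {y\<in>Op. tau y \<in> {t..<t + tw}}"
  proof
    fix y assume y: "y \<in> ?S"
    have "t \<le> tau y" unfolding t_def using fS y by (intro Min_le) auto
    moreover have "t > c - tw" using tin by auto
    ultimately show "y \<in> {y\<in>Op. tau y \<in> {t..<t + tw}}" using y by auto
  qed
  hence "card ?S \<le> card {y\<in>Op. tau y \<in> {t..<t + tw}}" using fO by (intro card_mono) auto
  also have "\<dots> \<le> n" using assms(1) unfolding layout_family_def by auto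
  finally show ?thesis .
qed

lemma blocking:
  assumes TI: "T \<in> layout_family E tau tw n" and OI: "Op \<in> layout_family E tau tw n"
    and fE: "finite E" and n1: "n \<ge> 1"
  shows "card {y\<in>Op-T. insert y T \<notin> layout_family E tau tw n} \<le> 2 * card T"
proof -
  let ?I = "layout_family E tau tw n"
  let ?B = "{y\<in>Op-T. insert y T \<notin> ?I}"
  have TE: "T \<subseteq> E" and OE: "Op \<subseteq> E" using TI OI unfolding layout_family_def by auto
  have fT: "finite T" using TE fE finite_subset by blast
  have fO: "finite Op" using OE fE finite_subset by blast
  have fB: "finite ?B" using fO by simp
  define a where "a y = card {e\<in>T. tau y - tw < tau e \<and> tau e \<le> tau y}" for y
  define b where "b y = card {e\<in>T. tau y < tau e \<and> tau e < tau y + tw}" for y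
  have key: "n \<le> a y + b y" if y: "y \<in> ?B" for y
  proof -
    from y have yO: "y \<in> Op" "y \<notin> T" and ni: "insert y T \<notin> ?I" by auto
    have "insert y T \<subseteq> E" using yO OE TE by auto
    with ni obtain t where t: "\<not> card {e\<in>insert y T. tau e \<in> {t..<t + tw}} \<le> n"
      unfolding layout_family_def by auto
    let ?W = "{e\<in>T. tau e \<in> {t..<t + tw}}"
    have cW: "card ?W \<le> n" using TI unfolding layout_family_def by auto
    have yin: "tau y \<in> {t..<t + tw}"
    proof (rule ccontr)
      assume "tau y \<notin> {t..<t + tw}"
      hence "{e\<in>insert y T. tau e \<in> {t..<t + tw}} = ?W" by auto
      with t cW show False by simp
    qed
    hence "{e\<in>insert y T. tau e \<in> {t..<t + tw}} = insert y ?W" by auto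
    hence "card {e\<in>insert y T. tau e \<in> {t..<t + tw}} = Suc (card ?W)"
      using fT yO by simp
    with t have nW: "n \<le> card ?W" by simp
    have "?W \<subseteq> {e\<in>T. tau y - tw < tau e \<and> tau e \<le> tau y} \<union> {e\<in>T. tau y < tau e \<and> tau e < tau y + tw}"
      using yin by auto
    hence "card ?W \<le> card ({e\<in>T. tau y - tw < tau e \<and> tau e \<le> tau y} \<union> {e\<in>T. tau y < tau e \<and> tau e < tau y + tw})"
      using fT by (intro card_mono) auto
    also have "\<dots> \<le> a y + b y" unfolding a_def b_def by (rule card_Un_le)
    finally show ?thesis using nW by simp
  qed
  have "n * card ?B = (\<Sum>y\<in>?B. n)" by simp
  also have "\<dots> \<le> (\<Sum>y\<in>?B. a y + b y)" using key by (intro sum_mono) auto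
  also have "\<dots> = (\<Sum>y\<in>?B. a y) + (\<Sum>y\<in>?B. b y)" by (simp add: sum.distrib)
  also have "(\<Sum>y\<in>?B. a y) = (\<Sum>e\<in>T. card {y\<in>?B. tau e \<le> tau y \<and> tau y < tau e + tw})"
  proof -
    have "(\<Sum>y\<in>?B. a y) = (\<Sum>y\<in>?B. \<Sum>e\<in>T. if tau y - tw < tau e \<and> tau e \<le> tau y then 1 else 0)"
      unfolding a_def using fT by (simp add: card_filter_sum)
    also have "\<dots> = (\<Sum>e\<in>T. \<Sum>y\<in>?B. if tau y - tw < tau e \<and> tau e \<le> tau y then 1 else 0)"
      by (rule sum.swap)
    also have "\<dots> = (\<Sum>e\<in>T. card {y\<in>?B. tau e \<le> tau y \<and> tau y < tau e + tw})"
      by (intro sum.cong refl) (subst card_filter_sum[OF fB], intro sum.cong refl, auto)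
    finally show ?thesis .
  qed
  also have "(\<Sum>y\<in>?B. b y) = (\<Sum>e\<in>T. card {y\<in>?B. tau e - tw < tau y \<and> tau y < tau e})"
  proof -
    have "(\<Sum>y\<in>?B. b y) = (\<Sum>y\<in>?B. \<Sum>e\<in>T. if tau y < tau e \<and> tau e < tau y + tw then 1 else 0)"
      unfolding b_def using fT by (simp add: card_filter_sum)
    also have "\<dots> = (\<Sum>e\<in>T. \<Sum>y\<in>?B. if tau y < tau e \<and> tau e < tau y + tw then 1 else 0)"
      by (rule sum.swap)
    also have "\<dots> = (\<Sum>e\<in>T. card {y\<in>?B. tau e - tw < tau y \<and> tau y < tau e})"
      by (intro sum.cong refl) (subst card_filter_sum[OF fB], intro sum.cong refl, auto)
    finally show ?thesis .
  qed
  also have "(\<Sum>e\<in>T. card {y\<in>?B. tau e \<le> tau y \<and> tau y < tau e + tw}) \<le> (\<Sum>e\<in>T. n)"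
  proof (intro sum_mono)
    fix e assume "e \<in> T"
    have "card {y\<in>?B. tau e \<le> tau y \<and> tau y < tau e + tw} \<le> card {y\<in>Op. tau y \<in> {tau e..<tau e + tw}}"
      using fO by (intro card_mono) auto
    also have "\<dots> \<le> n" using OI unfolding layout_family_def by auto
    finally show "card {y\<in>?B. tau e \<le> tau y \<and> tau y < tau e + tw} \<le> n" .
  qed
  also have "(\<Sum>e\<in>T. card {y\<in>?B. tau e - tw < tau y \<and> tau y < tau e}) \<le> (\<Sum>e\<in>T. n)"
  proof (intro sum_mono)
    fix e assume "e \<in> T"
    have "card {y\<in>?B. tau e - tw < tau y \<and> tau y < tau e} \<le> card {y\<in>Op. tau e - tw < tau y \<and> tau y < tau e}"
      using fO by (intro card_mono) auto
    also have "\<dots> \<le> n" by (rule open_window[OF OI fE])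
    finally show "card {y\<in>?B. tau e - tw < tau y \<and> tau y < tau e} \<le> n" .
  qed
  finally have "n * card ?B \<le> (\<Sum>e\<in>T. n) + (\<Sum>e\<in>T. n)" by simp
  moreover have "(\<Sum>e\<in>T. n) + (\<Sum>e\<in>T. n) = n * (2 * card T)" by simp
  ultimately have "n * card ?B \<le> n * (2 * card T)" by linarith
  thus ?thesis using n1 by simp
qed

lemma union_bound:
  fixes f :: "'e set \<Rightarrow> real"
  assumes sub: "\<And>A B x. A \<subseteq> B \<Longrightarrow> B \<subseteq> E \<Longrightarrow> x \<in> E \<Longrightarrow> f (insert x B) - f B \<le> f (insert x A) - f A"
    and "finite S" "T \<union> S \<subseteq> E"
  shows "f (T \<union> S) - f T \<le> (\<Sum>y\<in>S. f (insert y T) - f T)"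
  using assms(2,3)
proof (induction S rule: finite_induct)
  case empty then show ?case by simp
next
  case (insert x S)
  note insert.IH
  have "f (T \<union> insert x S) - f (T \<union> S) \<le> f (insert x T) - f T"
    using sub[of T "T \<union> S" x] insert.prems by auto
  moreover have "f (T \<union> S) - f T \<le> (\<Sum>y\<in>S. f (insert y T) - f T)" using insert by auto
  ultimately show ?case using insert.hyps by simp
qed

lemma greedy_generic:
  fixes f :: "'e set \<Rightarrow> real"
  assumes fE: "finite E"
    and down: "\<And>A B. B \<in> I \<Longrightarrow> A \<subseteq> B \<Longrightarrow> A \<in> I"
    and IE: "\<And>T. T \<in> I \<Longrightarrow> T \<subseteq> E"
    and OI: "Op \<in> I"
    and mono: "\<And>A B. A \<subseteq> B \<Longrightarrow> B \<subseteq> E \<Longrightarrow> f A \<le> f B"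
    and sub: "\<And>A B x. A \<subseteq> B \<Longrightarrow> B \<subseteq> E \<Longrightarrow> x \<in> E \<Longrightarrow> f (insert x B) - f B \<le> f (insert x A) - f A"
    and f0: "f {} = 0"
    and blk: "\<And>T. T \<in> I \<Longrightarrow> card {y\<in>Op-T. insert y T \<notin> I} \<le> 2 * card T"
  shows "greedy_reach E I f T \<Longrightarrow> T \<in> I \<and> (\<exists>d \<mu>. d \<ge> 0 \<and>
      (\<forall>e\<in>greedy_cands E I T. f (insert e T) - f T \<le> d) \<and>
      (\<forall>y\<in>{y\<in>Op-T. insert y T \<notin> I}. \<forall>T'. T \<subseteq> T' \<longrightarrow> T' \<subseteq> E \<longrightarrow> f (insert y T') - f T' \<le> \<mu> y) \<and>
      (\<Sum>y\<in>{y\<in>Op-T. insert y T \<notin> I}. \<mu> y)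
        + (2 * real (card T) - real (card {y\<in>Op-T. insert y T \<notin> I})) * d \<le> 2 * f T)"
proof (induction rule: greedy_reach.induct)
  case empty
  have e0: "{} \<in> I" using down[OF OI] by blast
  have X0: "{y\<in>Op-{}. insert y {} \<notin> I} = {}" using down[OF OI] by auto
  define d where "d = Max (insert 0 ((\<lambda>e. f (insert e {}) - f {}) ` greedy_cands E I {}))"
  have fc: "finite (greedy_cands E I {})" using fE unfolding greedy_cands_def by simp
  have "d \<ge> 0" unfolding d_def using fc by (intro Max_ge) auto
  moreover have "\<forall>e\<in>greedy_cands E I {}. f (insert e {}) - f {} \<le> d"
    unfolding d_def using fc by (auto intro: Max_ge)
  ultimately show ?case using e0 unfolding X0 by (intro conjI exI[of _ d] exI[of _ "\<lambda>_. 0"]) (auto simp: f0)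
next
  case (step T e)
  let ?X = "\<lambda>T. {y\<in>Op-T. insert y T \<notin> I}"
  from step.IH obtain d \<mu> where TI: "T \<in> I" and d0: "d \<ge> 0"
    and dc: "\<forall>e\<in>greedy_cands E I T. f (insert e T) - f T \<le> d"
    and mu: "\<forall>y\<in>?X T. \<forall>T'. T \<subseteq> T' \<longrightarrow> T' \<subseteq> E \<longrightarrow> f (insert y T') - f T' \<le> \<mu> y"
    and ineq: "(\<Sum>y\<in>?X T. \<mu> y) + (2 * real (card T) - real (card (?X T))) * d \<le> 2 * f T"
    by blast
  let ?T' = "insert e T"
  define \<delta> where "\<delta> = f ?T' - f T"
  have eT: "e \<in> E" "e \<notin> T" and T'I: "?T' \<in> I" using step.hyps(2) unfolding greedy_cands_def by auto
  have TE: "T \<subseteq> E" using IE TI by blast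
  have T'E: "?T' \<subseteq> E" using IE T'I by blast
  have fT: "finite T" using TE fE finite_subset by blast
  have fO: "finite Op" using IE[OF OI] fE finite_subset by blast
  have d0': "\<delta> \<ge> 0" unfolding \<delta>_def using mono[OF _ T'E, of T] by auto
  have dd: "\<delta> \<le> d" unfolding \<delta>_def using dc step.hyps(2) by auto
  have dc': "\<forall>e'\<in>greedy_cands E I ?T'. f (insert e' ?T') - f ?T' \<le> \<delta>"
  proof
    fix e' assume e': "e' \<in> greedy_cands E I ?T'"
    hence e'E: "e' \<in> E" and "e' \<notin> ?T'" and "insert e' ?T' \<in> I" unfolding greedy_cands_def by auto
    hence "insert e' T \<in> I" using down by blast
    hence "e' \<in> greedy_cands E I T" using e'E \<open>e' \<notin> ?T'\<close> unfolding greedy_cands_def by auto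
    hence "f (insert e' T) - f T \<le> \<delta>" using step.hyps(3) unfolding \<delta>_def by auto
    moreover have "f (insert e' ?T') - f ?T' \<le> f (insert e' T) - f T"
      using sub[of T ?T' e'] T'E e'E by auto
    ultimately show "f (insert e' ?T') - f ?T' \<le> \<delta>" by linarith
  qed
  have Xsub: "?X T \<subseteq> ?X ?T'"
  proof
    fix y assume y: "y \<in> ?X T"
    hence "y \<noteq> e" using T'I by auto
    moreover have "insert y ?T' \<notin> I" using y down[of "insert y ?T'" "insert y T"] by auto
    ultimately show "y \<in> ?X ?T'" using y by auto
  qed
  define \<mu>' where "\<mu>' y = (if y \<in> ?X T then \<mu> y else \<delta>)" for y
  have mu': "\<forall>y\<in>?X ?T'. \<forall>T''. ?T' \<subseteq> T'' \<longrightarrow> T'' \<subseteq> E \<longrightarrow> f (insert y T'') - f T'' \<le> \<mu>' y"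
  proof (intro ballI allI impI)
    fix y T'' assume y: "y \<in> ?X ?T'" and T'': "?T' \<subseteq> T''" "T'' \<subseteq> E"
    show "f (insert y T'') - f T'' \<le> \<mu>' y"
    proof (cases "y \<in> ?X T")
      case True then show ?thesis using mu T'' unfolding \<mu>'_def by auto
    next
      case False
      hence "insert y T \<in> I" using y by auto
      moreover have yE: "y \<in> E" using y IE[OF OI] by auto
      ultimately have "y \<in> greedy_cands E I T" using y unfolding greedy_cands_def by auto
      hence "f (insert y T) - f T \<le> \<delta>" using step.hyps(3) unfolding \<delta>_def by auto
      moreover have "f (insert y T'') - f T'' \<le> f (insert y T) - f T"
        using sub[of T T'' y] T'' yE by auto
      ultimately have "f (insert y T'') - f T'' \<le> \<delta>" by linarith
      thus ?thesis unfolding \<mu>'_def if_not_P[OF False] .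
    qed
  qed
  have fX: "finite (?X ?T')" using fO by simp
  have split: "?X ?T' = ?X T \<union> (?X ?T' - ?X T)" using Xsub by blast
  have sumeq: "(\<Sum>y\<in>?X ?T'. \<mu>' y) = (\<Sum>y\<in>?X T. \<mu> y) + \<delta> * real (card (?X ?T' - ?X T))"
  proof -
    have "(\<Sum>y\<in>?X ?T'. \<mu>' y) = (\<Sum>y\<in>?X T. \<mu>' y) + (\<Sum>y\<in>?X ?T' - ?X T. \<mu>' y)"
      using sum.subset_diff[OF Xsub fX, of \<mu>'] by (simp only: add.commute)
    also have "(\<Sum>y\<in>?X T. \<mu>' y) = (\<Sum>y\<in>?X T. \<mu> y)" unfolding \<mu>'_def by simp
    also have "(\<Sum>y\<in>?X ?T' - ?X T. \<mu>' y) = (\<Sum>y\<in>?X ?T' - ?X T. \<delta>)"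
    proof (rule sum.cong[OF refl])
      fix y assume "y \<in> ?X ?T' - ?X T"
      hence "y \<notin> ?X T" by blast
      thus "\<mu>' y = \<delta>" unfolding \<mu>'_def by (simp only: if_not_P if_False)
    qed
    also have "\<dots> = \<delta> * real (card (?X ?T' - ?X T))" by simp
    finally show ?thesis .
  qed
  have cX: "card (?X ?T') = card (?X T) + card (?X ?T' - ?X T)"
  proof -
    have "card (?X T) \<le> card (?X ?T')" by (rule card_mono[OF fX Xsub])
    moreover have "card (?X ?T' - ?X T) = card (?X ?T') - card (?X T)"
      by (rule card_Diff_subset[OF finite_subset[OF Xsub fX] Xsub])
    ultimately show ?thesis by simp
  qed
  have cT: "card ?T' = card T + 1" using fT eT by simp
  have blkT: "real (card (?X T)) \<le> 2 * real (card T)" using blk[OF TI] by linarith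
  have "(2 * real (card T) - real (card (?X T))) * \<delta> \<le> (2 * real (card T) - real (card (?X T))) * d"
    using blkT dd by (intro mult_left_mono) auto
  moreover have "(\<Sum>y\<in>?X ?T'. \<mu>' y) + (2 * real (card ?T') - real (card (?X ?T'))) * \<delta>
     = (\<Sum>y\<in>?X T. \<mu> y) + (2 * real (card T) - real (card (?X T))) * \<delta> + 2 * \<delta>"
    unfolding sumeq cX cT of_nat_add by (simp add: algebra_simps)
  moreover have "f ?T' = f T + \<delta>" unfolding \<delta>_def by simp
  ultimately have "(\<Sum>y\<in>?X ?T'. \<mu>' y) + (2 * real (card ?T') - real (card (?X ?T'))) * \<delta> \<le> 2 * f ?T'"
    using ineq by linarith
  then show ?case using T'I d0' dc' mu' by blast
qed

lemma average_nonneg: "(\<And>x. f x \<ge> 0) \<Longrightarrow> average A f \<ge> 0"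
  unfolding average_def by (intro divide_nonneg_nonneg sum_nonneg) auto

lemma layout_down: "finite E \<Longrightarrow> B \<in> layout_family E tau tw n \<Longrightarrow> A \<subseteq> B \<Longrightarrow> A \<in> layout_family E tau tw n"
proof -
  assume fE: "finite E" and B: "B \<in> layout_family E tau tw n" and AB: "A \<subseteq> B"
  have BE: "B \<subseteq> E" using B unfolding layout_family_def by auto
  have fB: "finite B" using BE fE finite_subset by blast
  show ?thesis unfolding layout_family_def
  proof (intro CollectI conjI allI)
    show "A \<subseteq> E" using AB BE by auto
    fix t
    have "card {e\<in>A. tau e \<in> {t..<t + tw}} \<le> card {e\<in>B. tau e \<in> {t..<t + tw}}"
      using fB AB by (intro card_mono) auto
    also have "\<dots> \<le> n" using B unfolding layout_family_def by auto
    finally show "card {e\<in>A. tau e \<in> {t..<t + tw}} \<le> n" .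
  qed
qed

theorem theorem3:
  fixes Ev E :: "'e set"
    and Sub RE :: "'e \<Rightarrow> 'r" and tau :: "'e \<Rightarrow> real"
    and piRE :: "'e \<Rightarrow> 'p" and pitau :: "'e \<Rightarrow> 'q"
    and E2ECooc :: "'r \<Rightarrow> 'r \<Rightarrow> real" and E2DCooc :: "'r \<Rightarrow> real \<Rightarrow> real"
    and GI :: "'r \<Rightarrow> real"
    and lam we1 we2 we3 wd1 wd2 tw :: real and n :: nat and s :: 'r
    and Tstar That :: "'e set"
  assumes "finite Ev" and "E \<subseteq> Ev"
    and "\<And>x y. E2ECooc x y \<ge> 0" and "\<And>x t. E2DCooc x t \<ge> 0" and "\<And>x. GI x \<ge> 0"
    and "0 \<le> lam" and "lam \<le> 1"
    and "we1 \<ge> 0" and "we2 \<ge> 0" and "we3 \<ge> 0" and "wd1 \<ge> 0" and "wd2 \<ge> 0"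
    and "tw > 0" and "n \<ge> 1"
    and "Tstar \<in> layout_family E tau tw n"
    and "\<forall>T\<in>layout_family E tau tw n.
           Rel Ev Sub RE tau piRE pitau E2ECooc E2DCooc GI lam we1 we2 we3 wd1 wd2 s T
           \<le> Rel Ev Sub RE tau piRE pitau E2ECooc E2DCooc GI lam we1 we2 we3 wd1 wd2 s Tstar"
    and "greedy_output E (layout_family E tau tw n)
           (Rel Ev Sub RE tau piRE pitau E2ECooc E2DCooc GI lam we1 we2 we3 wd1 wd2 s) That"
  shows "Rel Ev Sub RE tau piRE pitau E2ECooc E2DCooc GI lam we1 we2 we3 wd1 wd2 s That
         \<ge> 1/3 * Rel Ev Sub RE tau piRE pitau E2ECooc E2DCooc GI lam we1 we2 we3 wd1 wd2 s Tstar"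
proof -
  define f where "f = Rel Ev Sub RE tau piRE pitau E2ECooc E2DCooc GI lam we1 we2 we3 wd1 wd2 s"
  define I where "I = layout_family E tau tw n"
  define w2 where "w2 p = average {e\<in>Ev. piRE e = p} (\<lambda>e. E2ECooc (Sub e) (RE e))" for p
  define w5 where "w5 q = average {e\<in>Ev. pitau e = q} (\<lambda>e. E2DCooc (Sub e) (tau e))" for q
  have fE: "finite E" using assms(1,2) finite_subset by blast
  have fform: "f T = (lam * we1) * Cv RE (E2ECooc s) T + (lam * we2) * Cv piRE w2 T
      + (lam * we3) * Cv RE GI T + ((1 - lam) * wd1) * Cv tau (E2DCooc s) T
      + ((1 - lam) * wd2) * Cv pitau w5 T" for T
    unfolding f_def Rel_def E2E_def E2EPath_def G2E_def E2D_def E2DPath_def Cv_def w2_def w5_def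
    by (simp add: algebra_simps)
  have w2p: "w2 p \<ge> 0" for p unfolding w2_def by (rule average_nonneg) (use assms(3) in auto)
  have w5p: "w5 p \<ge> 0" for p unfolding w5_def by (rule average_nonneg) (use assms(4) in auto)
  have co: "lam * we1 \<ge> 0" "lam * we2 \<ge> 0" "lam * we3 \<ge> 0" "(1 - lam) * wd1 \<ge> 0" "(1 - lam) * wd2 \<ge> 0"
    using assms(6-12) by auto
  note LM = lin_mono[where f = f, OF _ _ co assms(3) w2p assms(5) assms(4) w5p fform]
  have mono: "\<And>A B. A \<subseteq> B \<Longrightarrow> B \<subseteq> E \<Longrightarrow> f A \<le> f B"
    using LM(1) fE finite_subset by blast
  have sub: "\<And>A B x. A \<subseteq> B \<Longrightarrow> B \<subseteq> E \<Longrightarrow> x \<in> E \<Longrightarrow> f (insert x B) - f B \<le> f (insert x A) - f A"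
    using LM(2) fE finite_subset by blast
  have f0: "f {} = 0" using fform[of "{}"] by (simp add: Cv_def)
  have down: "\<And>A B. B \<in> I \<Longrightarrow> A \<subseteq> B \<Longrightarrow> A \<in> I" unfolding I_def using layout_down[OF fE] by blast
  have IE: "\<And>T. T \<in> I \<Longrightarrow> T \<subseteq> E" unfolding I_def layout_family_def by auto
  have OI: "Tstar \<in> I" using assms(15) unfolding I_def .
  have blk: "\<And>T. T \<in> I \<Longrightarrow> card {y\<in>Tstar-T. insert y T \<notin> I} \<le> 2 * card T"
    unfolding I_def using blocking[OF _ assms(15) fE assms(14)] by blast
  have out: "greedy_reach E I f That" "greedy_cands E I That = {}"
    using assms(17) unfolding greedy_output_def f_def I_def by auto
  have GG: "That \<in> I \<and> (\<exists>d \<mu>. d \<ge> 0 \<and>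
      (\<forall>e\<in>greedy_cands E I That. f (insert e That) - f That \<le> d) \<and>
      (\<forall>y\<in>{y\<in>Tstar-That. insert y That \<notin> I}. \<forall>T'. That \<subseteq> T' \<longrightarrow> T' \<subseteq> E \<longrightarrow> f (insert y T') - f T' \<le> \<mu> y) \<and>
      (\<Sum>y\<in>{y\<in>Tstar-That. insert y That \<notin> I}. \<mu> y)
        + (2 * real (card That) - real (card {y\<in>Tstar-That. insert y That \<notin> I})) * d \<le> 2 * f That)"
    apply (rule greedy_generic[of E I Tstar f That])
    using fE down IE OI mono sub f0 blk out(1) by auto
  from GG obtain d \<mu> where TI: "That \<in> I" and d0: "d \<ge> 0"
    and mu: "\<forall>y\<in>{y\<in>Tstar-That. insert y That \<notin> I}. \<forall>T'. That \<subseteq> T' \<longrightarrow> T' \<subseteq> E \<longrightarrow> f (insert y T') - f T' \<le> \<mu> y"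
    and ineq: "(\<Sum>y\<in>{y\<in>Tstar-That. insert y That \<notin> I}. \<mu> y)
        + (2 * real (card That) - real (card {y\<in>Tstar-That. insert y That \<notin> I})) * d \<le> 2 * f That"
    by blast
  have TE: "That \<subseteq> E" using IE TI by blast
  have OE: "Tstar \<subseteq> E" using IE OI by blast
  have X: "{y\<in>Tstar-That. insert y That \<notin> I} = Tstar - That"
    using out(2) OE unfolding greedy_cands_def by auto
  have fO: "finite Tstar" using OE fE finite_subset by blast
  have "f Tstar \<le> f (That \<union> Tstar)" using mono TE OE by auto
  also have "f (That \<union> Tstar) = f (That \<union> (Tstar - That))" by (simp add: Un_Diff_cancel)
  also have "\<dots> \<le> f That + (\<Sum>y\<in>Tstar - That. f (insert y That) - f That)"
  proof -
    have "f (That \<union> (Tstar - That)) - f That \<le> (\<Sum>y\<in>Tstar - That. f (insert y That) - f That)"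
      apply (rule union_bound[where f = f and E = E and S = "Tstar - That" and T = That])
      apply (fact sub)
      using fO TE OE by auto
    thus ?thesis by simp
  qed
  also have "(\<Sum>y\<in>Tstar - That. f (insert y That) - f That) \<le> (\<Sum>y\<in>Tstar - That. \<mu> y)"
    using mu TE unfolding X by (intro sum_mono) auto
  finally have A: "f Tstar \<le> f That + (\<Sum>y\<in>Tstar - That. \<mu> y)" by simp
  have "real (card (Tstar - That)) \<le> 2 * real (card That)" using blk[OF TI] unfolding X by linarith
  hence "0 \<le> (2 * real (card That) - real (card (Tstar - That))) * d" using d0 by simp
  with ineq A have "f Tstar \<le> 3 * f That" unfolding X by linarith
  thus ?thesis unfolding f_def by simp
qed

end
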